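(* Let $\mathfrak{g}'\to\mathfrak{g}$ be a nontrivial deformation of finite-dimensional real Lie algebras. If the polynomial $P_T(\mathfrak{g}')-P_T(\mathfrak{g})$ has a negative coefficient, then the deformation is not of plateau type.
   Context: For a finite-dimensional real Lie algebra $\mathfrak{h}$, $b_i(\mathfrak{h})=\dim H^i(\mathfrak{h},\mathbb{R})$ (cohomology with trivial coefficients) and the Poincaré polynomial is $P_T(\mathfrak{h})=1+\sum_{i=1}^{\dim\mathfrak{h}}b_i(\mathfrak{h})T^i$. A deformation $\mathfrak{g}'\to\mathfrak{g}$ is a family $\mathfrak{g}_t$, $t\in[0,1]$, of Lie algebra structures on a fixed vector space, depending continuously on $t$, with $\mathfrak{g}_0=\mathfrak{g}'$ and $\mathfrak{g}_1\cong\mathfrak{g}$; it is nontrivial if $\mathfrak{g}\not\cong\mathfrak{g}'$. It is of plateau type if $\mathfrak{g}_0\not\cong\mathfrak{g}_1$ and $\mathfrak{g}_t\cong\mathfrak{g}_1$ for all $t\in(0,1]$. *)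

theory Defs
  imports "HOL-Analysis.Analysis" "HOL-Computational_Algebra.Polynomial" "HOL-Library.Function_Algebras"
begin

text \<open>A Lie algebra structure on the fixed real vector space with basis indexed by the
  finite type 'n, given by structure constants: [e_i, e_j] = sum_k c i j k e_k.\<close>

type_synonym 'n lie_str = "'n \<Rightarrow> 'n \<Rightarrow> 'n \<Rightarrow> real"

definition is_lie :: "'n::finite lie_str \<Rightarrow> bool" where
  "is_lie c \<longleftrightarrow>
     (\<forall>i k. c i i k = 0) \<and>
     (\<forall>i j k. c i j k = - c j i k) \<and>
     (\<forall>i j k m. (\<Sum>l\<in>UNIV. c i j l * c l k m + c j k l * c l i m + c k i l * c l j m) = 0)"

text \<open>Isomorphism: an invertible linear map A (matrix A m i = m-th coordinate of A e_i)
  with A [x,y] = [A x, A y]'.\<close>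
definition lie_iso :: "'n::finite lie_str \<Rightarrow> 'n lie_str \<Rightarrow> bool" where
  "lie_iso c c' \<longleftrightarrow>
     (\<exists>A B :: 'n \<Rightarrow> 'n \<Rightarrow> real.
        (\<forall>i j. (\<Sum>k\<in>UNIV. A i k * B k j) = (if i = j then 1 else 0)) \<and>
        (\<forall>i j. (\<Sum>k\<in>UNIV. B i k * A k j) = (if i = j then 1 else 0)) \<and>
        (\<forall>i j m. (\<Sum>k\<in>UNIV. c i j k * A m k) =
                 (\<Sum>k\<in>UNIV. \<Sum>l\<in>UNIV. A k i * A l j * c' k l m)))"

text \<open>Chevalley--Eilenberg cochains with trivial coefficients: alternating p-forms,
  represented by their values on tuples of basis vectors.\<close>
definition cochains :: "nat \<Rightarrow> ('n list \<Rightarrow> real) set" where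
  "cochains p = {\<omega>. (\<forall>xs. length xs \<noteq> p \<longrightarrow> \<omega> xs = 0) \<and>
      (\<forall>xs i j. length xs = p \<and> i < j \<and> j < p \<longrightarrow>
                 \<omega> (xs[i := xs ! j, j := xs ! i]) = - \<omega> xs)}"

definition drop_two :: "'a list \<Rightarrow> nat \<Rightarrow> nat \<Rightarrow> 'a list" where
  "drop_two xs i j = [xs ! l. l \<leftarrow> [0..<length xs], l \<noteq> i \<and> l \<noteq> j]"

definition ce_diff :: "'n::finite lie_str \<Rightarrow> ('n list \<Rightarrow> real) \<Rightarrow> ('n list \<Rightarrow> real)" where
  "ce_diff c \<omega> xs = (\<Sum>j<length xs. \<Sum>i<j. (-1) ^ (i + j) *
       (\<Sum>k\<in>UNIV. c (xs ! i) (xs ! j) k * \<omega> (k # drop_two xs i j)))"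

definition cocycles :: "'n::finite lie_str \<Rightarrow> nat \<Rightarrow> ('n list \<Rightarrow> real) set" where
  "cocycles c p = {\<omega> \<in> cochains p. ce_diff c \<omega> = (\<lambda>_. 0)}"

definition coboundaries :: "'n::finite lie_str \<Rightarrow> nat \<Rightarrow> ('n list \<Rightarrow> real) set" where
  "coboundaries c p = (if p = 0 then {\<lambda>_. 0} else ce_diff c ` cochains (p - 1))"

abbreviation fdim :: "('n list \<Rightarrow> real) set \<Rightarrow> nat" where
  "fdim \<equiv> vector_space.dim (\<lambda>(r::real) (f::'n list \<Rightarrow> real) x. r * f x)"

definition betti :: "'n::finite lie_str \<Rightarrow> nat \<Rightarrow> nat" where
  "betti c p = fdim (cocycles c p) - fdim (coboundaries c p)"

definition poincare_poly :: "'n::finite lie_str \<Rightarrow> real poly" where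
  "poincare_poly c = 1 + (\<Sum>i\<in>{1..CARD('n)}. monom (real (betti c i)) i)"

text \<open>A deformation g' -> g: a continuous family g_t, t in [0,1], of Lie structures
  on the fixed space, g_0 = g' and g_1 (isomorphic to g).\<close>
definition is_deformation :: "(real \<Rightarrow> 'n::finite lie_str) \<Rightarrow> bool" where
  "is_deformation c \<longleftrightarrow> (\<forall>t\<in>{0..1}. is_lie (c t)) \<and>
     (\<forall>i j k. continuous_on {0..1} (\<lambda>t. c t i j k))"

definition plateau_type :: "(real \<Rightarrow> 'n::finite lie_str) \<Rightarrow> bool" where
  "plateau_type c \<longleftrightarrow> \<not> lie_iso (c 0) (c 1) \<and> (\<forall>t\<in>{0<..1}. lie_iso (c t) (c 1))"

end

theory Submission
  imports Defs
begin


lemma vs: "vector_space (\<lambda>(r::real) (f::'a \<Rightarrow> real) x. r * f x)"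
  by unfold_locales (auto simp: fun_eq_iff algebra_simps)

lemma sum_fun_apply: "(sum f A) x = sum (\<lambda>i. f i x) A"
  by (induction A rule: infinite_finite_induct) auto

context vector_space begin

lemma my_dim_image_le:
  assumes mh: "module_hom scale scale f" and Y: "Y \<subseteq> span F" and F: "finite F"
  shows "dim (f ` Y) \<le> dim Y"
proof -
  obtain K where K: "K \<subseteq> Y" "independent K" "Y \<subseteq> span K" "card K = dim Y" by (rule basis_exists)
  have fK: "finite K" using independent_span_bound[OF F K(2)] K(1) Y by blast
  have "f ` Y \<subseteq> span (f ` K)" using module_hom.spans_image[OF mh K(3)] .
  then have "dim (f ` Y) \<le> card (f ` K)" using dim_le_card fK by blast
  also have "\<dots> \<le> card K" using card_image_le fK by blast
  finally show ?thesis using K(4) by simp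
qed

lemma my_card_le_dim:
  assumes G: "independent G" "G \<subseteq> V" and V: "V \<subseteq> span F" "finite F"
  shows "finite G \<and> card G \<le> dim V"
proof -
  obtain K where K: "K \<subseteq> V" "independent K" "V \<subseteq> span K" "card K = dim V" by (rule basis_exists)
  have fK: "finite K" using independent_span_bound[OF V(2) K(2)] K(1) V by blast
  show ?thesis using independent_span_bound[OF fK G(1)] G(2) K by auto
qed

lemma disjoint_span_zero:
  assumes B: "independent B" "finite B" and KB: "K \<subseteq> B"
    and zK: "z \<in> span K" and zE: "z \<in> span (B - K)"
  shows "z = 0"
proof -
  have fK: "finite K" using B(2) KB finite_subset by blast
  have fE: "finite (B - K)" using B(2) by simp
  obtain u where u: "z = (\<Sum>v\<in>K. u v *s v)" using zK span_finite[OF fK] by auto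
  obtain w where w: "z = (\<Sum>v\<in>B - K. w v *s v)" using zE span_finite[OF fE] by auto
  define a where "a v = (if v \<in> K then u v else - w v)" for v
  have "(\<Sum>v\<in>B. a v *s v) = (\<Sum>v\<in>K. a v *s v) + (\<Sum>v\<in>B - K. a v *s v)"
    using sum.subset_diff[OF KB B(2)] by (simp add: add.commute)
  also have "(\<Sum>v\<in>K. a v *s v) = z" unfolding u a_def by (rule sum.cong) auto
  also have "(\<Sum>v\<in>B - K. a v *s v) = (\<Sum>v\<in>B - K. - (w v *s v))"
    by (rule sum.cong) (auto simp: a_def)
  also have "\<dots> = - z" by (simp add: w sum_negf)
  finally have "(\<Sum>v\<in>B. a v *s v) = 0" by simp
  then have "\<forall>v\<in>B. a v = 0" using B dependent_finite[OF B(2)] by blast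
  then have "\<forall>v\<in>K. u v = 0" using KB unfolding a_def by (metis subsetD)
  then show ?thesis unfolding u by simp
qed

lemma my_rank_nullity:
  assumes C: "subspace C" "C \<subseteq> span F" "finite F" and mh: "module_hom scale scale D"
  shows "dim {x\<in>C. D x = 0} + dim (D ` C) = dim C"
proof -
  let ?Z = "{x\<in>C. D x = 0}"
  obtain K where K: "K \<subseteq> ?Z" "independent K" "?Z \<subseteq> span K" "card K = dim ?Z" by (rule basis_exists)
  obtain B where B: "K \<subseteq> B" "B \<subseteq> C" "independent B" "C \<subseteq> span B"
    using maximal_independent_subset_extend[of K C] K by auto
  have fB: "finite B" using independent_span_bound[OF C(3) B(3)] B(2) C(2) by blast
  have cardB: "card B = dim C" using basis_card_eq_dim B by blast
  define E where "E = B - K"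
  have fE: "finite E" "finite K" using fB B(1) finite_subset E_def by auto
  have cardBKE: "card B = card K + card E"
    using card_Un_disjoint[OF fE(2) fE(1)] B(1) E_def by (metis Diff_disjoint Un_Diff_cancel sup.absorb2)
  have DK0: "\<And>k. k \<in> K \<Longrightarrow> D k = 0" using K(1) by auto
  have EC: "span E \<subseteq> C" using span_minimal[of E C] B(2) C(1) E_def by auto
  have injE: "inj_on D (span E)"
  proof (rule inj_onI)
    fix x y assume x: "x \<in> span E" and y: "y \<in> span E" and e: "D x = D y"
    have xy: "x - y \<in> span E" using span_diff[OF x y] .
    have "D (x - y) = 0" using e module_hom.diff[OF mh] by simp
    then have "x - y \<in> span K" using xy EC K(3) by auto
    then have "x - y = 0" using disjoint_span_zero[OF B(3) fB B(1)] xy E_def by blast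
    then show "x = y" by simp
  qed
  have indDE: "independent (D ` E)"
    using module_hom.independent_injective_image[OF mh _ injE] independent_mono[OF B(3)] E_def by blast
  have cardDE: "card (D ` E) = card E"
    using card_image inj_on_subset[OF injE span_superset] by blast
  have "D ` C \<subseteq> span (D ` E)"
  proof
    fix y assume "y \<in> D ` C"
    then obtain x where x: "x \<in> C" "y = D x" by auto
    have "x \<in> span (K \<union> E)" using x B(4) B(1) E_def by (metis Un_Diff_cancel sup.absorb2 subsetD)
    then obtain a b where ab: "x = a + b" "a \<in> span K" "b \<in> span E" using span_Un by blast
    have "D a = 0" using module_hom.eq_0_on_span[OF mh] DK0 ab(2) by blast
    then have "y = D b" using x ab module_hom.add[OF mh] by simp
    then show "y \<in> span (D ` E)" using module_hom.span_image[OF mh] ab(3) by blast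
  qed
  moreover have "D ` E \<subseteq> D ` C" using B(2) E_def by auto
  ultimately have "dim (D ` C) = card E" using dim_unique[OF _ _ indDE cardDE] by blast
  then show ?thesis using cardB cardBKE K(4) by simp
qed


lemma dim_conj_eq:
  assumes C: "C \<subseteq> span F" "finite F"
    and mP: "module_hom scale scale P" and mQ: "module_hom scale scale Q"
    and mD2: "module_hom scale scale D2"
    and PQ: "\<And>x. P (Q x) = x" and QP: "\<And>x. Q (P x) = x"
    and PC: "P ` C \<subseteq> C" and QC: "Q ` C \<subseteq> C"
    and inter: "\<And>x. D1 (P x) = P (D2 x)"
  shows "dim (D1 ` C) = dim (D2 ` C)"
proof -
  have PCe: "P ` C = C"
  proof
    show "C \<subseteq> P ` C"
    proof
      fix x assume "x \<in> C"
      then have "Q x \<in> C" using QC by auto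
      then show "x \<in> P ` C" using PQ[of x] by (metis image_eqI)
    qed
  qed (rule PC)
  have e1: "D1 ` C = P ` (D2 ` C)" 
    by (subst PCe[symmetric]) (auto simp: image_image inter)
  have Y: "D2 ` C \<subseteq> span (D2 ` F)" using module_hom.spans_image[OF mD2 C(1)] .
  have Y2: "P ` D2 ` C \<subseteq> span (P ` D2 ` F)" using module_hom.spans_image[OF mP Y] .
  have "dim (P ` D2 ` C) \<le> dim (D2 ` C)" using my_dim_image_le[OF mP Y] C(2) by blast
  moreover have "dim (Q ` P ` D2 ` C) \<le> dim (P ` D2 ` C)" using my_dim_image_le[OF mQ Y2] C(2) by blast
  moreover have "Q ` P ` D2 ` C = D2 ` C" by (simp add: image_image QP)
  ultimately show ?thesis using e1 by simp
qed

end

definition indepF :: "nat \<Rightarrow> (nat \<Rightarrow> 'a \<Rightarrow> real) \<Rightarrow> bool" where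
  "indepF r g \<longleftrightarrow> (\<forall>a. (\<forall>x. (\<Sum>i<r. a i * g i x) = 0) \<longrightarrow> (\<forall>i<r. a i = 0))"

lemma persist:
  assumes "indepF r g0" "\<And>i x. i < r \<Longrightarrow> ((\<lambda>t. g t i x) \<longlongrightarrow> g0 i x) F"
  shows "eventually (\<lambda>t. indepF r (g t)) F"
  using assms
proof (induction r arbitrary: g g0)
  case 0
  then show ?case by (simp add: indepF_def)
next
  case (Suc r)
  have "\<exists>s. g0 r s \<noteq> 0"
  proof (rule ccontr)
    assume "\<not> ?thesis"
    then have z: "\<And>x. g0 r x = 0" by auto
    define a where "a i = (if i = r then 1 else (0::real))" for i
    have "\<forall>x. (\<Sum>i<Suc r. a i * g0 i x) = 0" by (simp add: a_def z)
    then have "a r = 0" using Suc.prems(1) unfolding indepF_def by blast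
    then show False by (simp add: a_def)
  qed
  then obtain s where s: "g0 r s \<noteq> 0" by blast
  define h where "h t i x = g t i x - g t i s / g t r s * g t r x" for t i x
  define h0 where "h0 i x = g0 i x - g0 i s / g0 r s * g0 r x" for i x
  have key: "(\<Sum>i<r. a i * (G i x - G i s / G r s * G r x)) =
      (\<Sum>i<r. a i * G i x) - (\<Sum>i<r. a i * G i s) / G r s * (G r x::real)" for a G x
    by (simp add: right_diff_distrib sum_subtractf sum_distrib_right sum_divide_distrib mult.assoc)
  have ih0: "indepF r h0"
    unfolding indepF_def
  proof (rule allI, rule impI)
    fix a assume H: "\<forall>x. (\<Sum>i<r. a i * h0 i x) = 0"
    define b where "b i = (if i < r then a i else - (\<Sum>i<r. a i * g0 i s) / g0 r s)" for i
    have "\<forall>x. (\<Sum>i<Suc r. b i * g0 i x) = 0"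
    proof
      fix x
      have "(\<Sum>i<Suc r. b i * g0 i x) = (\<Sum>i<r. a i * g0 i x) - (\<Sum>i<r. a i * g0 i s) / g0 r s * g0 r x"
        by (simp add: b_def)
      also have "\<dots> = (\<Sum>i<r. a i * h0 i x)" unfolding h0_def key ..
      finally show "(\<Sum>i<Suc r. b i * g0 i x) = 0" using H by simp
    qed
    then have bz: "\<forall>i<Suc r. b i = 0" using Suc.prems(1) unfolding indepF_def by blast
    show "\<forall>i<r. a i = 0"
    proof (intro allI impI)
      fix i assume i: "i < r"
      then have "b i = 0" using bz by simp
      then show "a i = 0" using i by (simp add: b_def)
    qed
  qed
  have tr: "\<And>x. ((\<lambda>t. g t r x) \<longlongrightarrow> g0 r x) F" using Suc.prems(2) by simp
  have th: "((\<lambda>t. h t i x) \<longlongrightarrow> h0 i x) F" if "i < r" for i x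
    unfolding h_def h0_def
    using that Suc.prems(2) tr s
    by (intro tendsto_intros) auto
  have ev1: "eventually (\<lambda>t. indepF r (h t)) F" using Suc.IH[OF ih0 th] by blast
  have ev2: "eventually (\<lambda>t. g t r s \<noteq> 0) F" using tendsto_imp_eventually_ne[OF tr[of s] s] .
  show ?case
  proof (rule eventually_mono[OF eventually_conj[OF ev1 ev2]])
    fix t assume A: "indepF r (h t) \<and> g t r s \<noteq> 0"
    show "indepF (Suc r) (g t)"
      unfolding indepF_def
    proof (rule allI, rule impI)
      fix a assume H: "\<forall>x. (\<Sum>i<Suc r. a i * g t i x) = 0"
      have ar: "a r = - (\<Sum>i<r. a i * g t i s) / g t r s"
        using H[rule_format, of s] A by (simp add: field_simps)
      have "\<forall>x. (\<Sum>i<r. a i * h t i x) = 0"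
      proof
        fix x
        have "(\<Sum>i<r. a i * h t i x) = (\<Sum>i<r. a i * g t i x) - (\<Sum>i<r. a i * g t i s) / g t r s * g t r x"
          unfolding h_def key ..
        also have "\<dots> = (\<Sum>i<Suc r. a i * g t i x)" by (simp add: ar)
        finally show "(\<Sum>i<r. a i * h t i x) = 0" using H by simp
      qed
      then have "\<forall>i<r. a i = 0" using A unfolding indepF_def by blast
      moreover then have "a r = 0" using ar by simp
      ultimately show "\<forall>i<Suc r. a i = 0" using less_Suc_eq by auto
    qed
  qed
qed



definition Ls :: "nat \<Rightarrow> 'n list set" where "Ls n = {ys. length ys = n}"

lemma finite_Ls: "finite (Ls n :: 'n::finite list set)"
  using finite_lists_length_eq[of "UNIV :: 'n set" n] by (simp add: Ls_def)

lemma sum_Ls_Suc: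
  "(\<Sum>ys\<in>Ls (Suc n). F ys) = (\<Sum>y\<in>(UNIV :: 'n::finite set). \<Sum>ys\<in>Ls n. F (y # ys))"
proof -
  have e: "Ls (Suc n) = (\<lambda>p. fst p # snd p) ` (UNIV \<times> Ls n)"
  proof (rule set_eqI)
    fix xs
    show "xs \<in> Ls (Suc n) \<longleftrightarrow> xs \<in> (\<lambda>p. fst p # snd p) ` (UNIV \<times> Ls n)"
      by (cases xs) (auto simp: Ls_def image_iff)
  qed
  have inj: "inj_on (\<lambda>p. fst p # snd p) (UNIV \<times> Ls n :: ('n \<times> 'n list) set)"
    by (auto simp: inj_on_def)
  have "(\<Sum>ys\<in>Ls (Suc n). F ys) = (\<Sum>p\<in>UNIV \<times> Ls n. F (fst p # snd p))"
    unfolding e by (simp add: sum.reindex[OF inj])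
  also have "\<dots> = (\<Sum>y\<in>UNIV. \<Sum>ys\<in>Ls n. F (y # ys))"
    by (simp add: sum.cartesian_product split_def)
  finally show ?thesis .
qed

lemma Ls_0: "Ls 0 = {[]}" by (auto simp: Ls_def)

lemma sum_prod_Ls:
  "(\<Sum>ys\<in>(Ls n :: 'n::finite list set). \<Prod>l<n. f l (ys!l)) = (\<Prod>l<n. \<Sum>y\<in>UNIV. (f l y :: real))"
proof (induction n arbitrary: f)
  case 0
  then show ?case by (simp add: Ls_0)
next
  case (Suc n)
  have "(\<Sum>ys\<in>(Ls (Suc n) :: 'n list set). \<Prod>l<Suc n. f l (ys!l))
      = (\<Sum>y\<in>UNIV. \<Sum>ys\<in>Ls n. f 0 y * (\<Prod>l<n. f (Suc l) (ys!l)))"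
    by (simp add: sum_Ls_Suc prod.lessThan_Suc_shift del: prod.lessThan_Suc)
  also have "\<dots> = (\<Sum>y\<in>UNIV. f 0 y * (\<Sum>ys\<in>(Ls n :: 'n list set). (\<Prod>l<n. f (Suc l) (ys!l))))"
    by (simp add: sum_distrib_left)
  also have "\<dots> = (\<Sum>y\<in>UNIV. f 0 y) * (\<Prod>l<n. \<Sum>y\<in>UNIV. f (Suc l) y)"
    using Suc.IH[of "\<lambda>l. f (Suc l)"] by (simp add: sum_distrib_right)
  also have "\<dots> = (\<Prod>l<Suc n. \<Sum>y\<in>UNIV. f l y)"
    by (simp add: prod.lessThan_Suc_shift del: prod.lessThan_Suc)
  finally show ?case .
qed

definition PA :: "('n \<Rightarrow> 'n \<Rightarrow> real) \<Rightarrow> 'n list \<Rightarrow> 'n list \<Rightarrow> real" where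
  "PA A ys xs = (\<Prod>l<length xs. A (ys!l) (xs!l))"

definition pull :: "('n::finite \<Rightarrow> 'n \<Rightarrow> real) \<Rightarrow> ('n list \<Rightarrow> real) \<Rightarrow> 'n list \<Rightarrow> real" where
  "pull A \<omega> xs = (\<Sum>ys\<in>Ls (length xs). PA A ys xs * \<omega> ys)"

lemma PA_Cons: "PA A (y#ys) (x#xs) = A y x * PA A ys xs"
  by (simp add: PA_def prod.lessThan_Suc_shift del: prod.lessThan_Suc)

lemma perm_reindex:
  assumes d: "distinct idx" and s: "set idx = {..<n}"
  shows "(\<Sum>ys\<in>(Ls n :: 'n::finite list set). F (map (nth ys) idx)) = (\<Sum>ys\<in>Ls n. F ys)"
proof -
  have len: "length idx = n" using distinct_card[OF d] s by simp
  let ?p = "\<lambda>ys::'n list. map (nth ys) idx"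
  have inj: "inj_on ?p (Ls n)"
  proof (rule inj_onI)
    fix ys zs assume ys: "ys \<in> Ls n" and zs: "zs \<in> Ls n" and e: "?p ys = ?p zs"
    have "\<forall>l\<in>set idx. ys ! l = zs ! l" using e by (simp add: map_eq_conv)
    then show "ys = zs" using ys zs s by (intro nth_equalityI) (auto simp: Ls_def)
  qed
  have im: "?p ` Ls n \<subseteq> Ls n" using len by (auto simp: Ls_def)
  have "?p ` Ls n = Ls n" using endo_inj_surj[OF finite_Ls im inj] .
  then have "(\<Sum>ys\<in>Ls n. F ys) = (\<Sum>ys\<in>?p ` Ls n. F ys)" by simp
  also have "\<dots> = (\<Sum>ys\<in>Ls n. F (?p ys))" using sum.reindex[OF inj] by simp
  finally show ?thesis by simp
qed

lemma perm_PA: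
  assumes d: "distinct idx" and s: "set idx = {..<n}" and ys: "length ys = n" and xs: "length xs = n"
  shows "PA A (map (nth ys) idx) (map (nth xs) idx) = PA A ys xs"
proof -
  have len: "length idx = n" using distinct_card[OF d] s by simp
  have inj: "inj_on (nth idx) {..<n}" using inj_on_nth[OF d] len by auto
  have im: "nth idx ` {..<n} = {..<n}" using s len by (auto simp: set_conv_nth)
  have "PA A (map (nth ys) idx) (map (nth xs) idx) = (\<Prod>l<n. A (ys ! (idx ! l)) (xs ! (idx ! l)))"
    unfolding PA_def using len by (intro prod.cong) auto
  also have "\<dots> = (\<Prod>m\<in>nth idx ` {..<n}. A (ys ! m) (xs ! m))"
    by (simp add: prod.reindex[OF inj] comp_def)
  also have "\<dots> = PA A ys xs" unfolding im PA_def xs ..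
  finally show ?thesis .
qed

lemma swap_as_map:
  assumes "i < length xs" "j < length xs"
  shows "xs[i := xs ! j, j := xs ! i] = map (nth xs) (let u = [0..<length xs] in u[i := u!j, j := u!i])"
  using assms by (intro nth_equalityI) (auto simp: Let_def nth_list_update)

lemma swap_perm:
  assumes "i < n" "j < n"
  shows "distinct (let u = [0..<n] in u[i := u!j, j := u!i])"
    and "set (let u = [0..<n] in u[i := u!j, j := u!i]) = {..<n}"
  unfolding Let_def
  subgoal by (subst distinct_swap) (use assms in auto)
  subgoal by (subst set_swap) (use assms in auto)
  done

lemma list_comp_filter: "[f x. x \<leftarrow> xs, P x] = map f (filter P xs)"
  by (induction xs) auto

lemma front_perm:
  assumes "i < j" "j < n"
  shows "distinct (i # j # filter (\<lambda>l. l \<noteq> i \<and> l \<noteq> j) [0..<n])"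
    and "set (i # j # filter (\<lambda>l. l \<noteq> i \<and> l \<noteq> j) [0..<n]) = {..<n}"
  using assms by auto

lemma front_as_map:
  "ys ! i # ys ! j # drop_two ys i j = map (nth ys) (i # j # filter (\<lambda>l. l \<noteq> i \<and> l \<noteq> j) [0..<length ys])"
  by (simp add: drop_two_def list_comp_filter)

lemma length_drop_two:
  assumes "i < j" "j < length xs"
  shows "length (drop_two xs i j) = length xs - 2"
proof -
  have "length (map (nth xs) (i # j # filter (\<lambda>l. l \<noteq> i \<and> l \<noteq> j) [0..<length xs])) = length xs"
    using distinct_card[OF front_perm(1)[OF assms]] front_perm(2)[OF assms] by simp
  then show ?thesis using front_as_map[of xs i j] by (metis diff_Suc_Suc length_Cons minus_nat.diff_0 numeral_2_eq_2)
qed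


lemma A1: "(\<Sum>k\<in>K. c k * (\<Sum>m\<in>M. \<Sum>z\<in>Z. a m k * p z m)) = (\<Sum>m\<in>M. \<Sum>z\<in>Z. (\<Sum>k\<in>K. c k * a m k) * (p z m::real))"
proof -
  have "(\<Sum>k\<in>K. c k * (\<Sum>m\<in>M. \<Sum>z\<in>Z. a m k * p z m)) = (\<Sum>k\<in>K. \<Sum>m\<in>M. \<Sum>z\<in>Z. c k * a m k * p z m)"
    by (simp add: sum_distrib_left mult.assoc)
  also have "\<dots> = (\<Sum>m\<in>M. \<Sum>k\<in>K. \<Sum>z\<in>Z. c k * a m k * p z m)" by (rule sum.swap)
  also have "\<dots> = (\<Sum>m\<in>M. \<Sum>z\<in>Z. \<Sum>k\<in>K. c k * a m k * p z m)" by (rule sum.cong[OF refl], rule sum.swap)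
  also have "\<dots> = (\<Sum>m\<in>M. \<Sum>z\<in>Z. (\<Sum>k\<in>K. c k * a m k) * p z m)" by (simp add: sum_distrib_right)
  finally show ?thesis .
qed
lemma A2: "(\<Sum>a\<in>U. \<Sum>b\<in>U. \<Sum>z\<in>Z. X a * Y b * P z * (\<Sum>k\<in>U. C a b k * W k z)) = (\<Sum>k\<in>U. \<Sum>z\<in>Z. (\<Sum>a\<in>U. \<Sum>b\<in>U. X a * Y b * C a b k) * P z * (W k z::real))"
proof -
  have "(\<Sum>a\<in>U. \<Sum>b\<in>U. \<Sum>z\<in>Z. X a * Y b * P z * (\<Sum>k\<in>U. C a b k * W k z)) = (\<Sum>a\<in>U. \<Sum>b\<in>U. \<Sum>z\<in>Z. \<Sum>k\<in>U. X a * Y b * C a b k * P z * W k z)"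
    by (simp add: sum_distrib_left mult_ac)
  also have "\<dots> = (\<Sum>a\<in>U. \<Sum>b\<in>U. \<Sum>k\<in>U. \<Sum>z\<in>Z. X a * Y b * C a b k * P z * W k z)"
    by (rule sum.cong[OF refl], rule sum.cong[OF refl], rule sum.swap)
  also have "\<dots> = (\<Sum>a\<in>U. \<Sum>k\<in>U. \<Sum>b\<in>U. \<Sum>z\<in>Z. X a * Y b * C a b k * P z * W k z)"
    by (rule sum.cong[OF refl], rule sum.swap)
  also have "\<dots> = (\<Sum>k\<in>U. \<Sum>a\<in>U. \<Sum>b\<in>U. \<Sum>z\<in>Z. X a * Y b * C a b k * P z * W k z)"
    by (rule sum.swap)
  also have "\<dots> = (\<Sum>k\<in>U. \<Sum>a\<in>U. \<Sum>z\<in>Z. \<Sum>b\<in>U. X a * Y b * C a b k * P z * W k z)"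
    by (rule sum.cong[OF refl], rule sum.cong[OF refl], rule sum.swap)
  also have "\<dots> = (\<Sum>k\<in>U. \<Sum>z\<in>Z. \<Sum>a\<in>U. \<Sum>b\<in>U. X a * Y b * C a b k * P z * W k z)"
    by (rule sum.cong[OF refl], rule sum.swap)
  also have "\<dots> = (\<Sum>k\<in>U. \<Sum>z\<in>Z. (\<Sum>a\<in>U. \<Sum>b\<in>U. X a * Y b * C a b k) * P z * (W k z::real))"
    by (simp add: sum_distrib_right)
  finally show ?thesis .
qed

lemma pull_add: "pull A (f + g) = pull A f + pull A g"
  by (simp add: pull_def fun_eq_iff sum.distrib distrib_left)

lemma pull_scale: "pull A (\<lambda>x. r * f x) = (\<lambda>x. r * pull A f x)"
  by (simp add: pull_def fun_eq_iff sum_distrib_left mult.left_commute)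

lemma prod_delta:
  assumes "length zs = n" "length xs = n"
  shows "(\<Prod>l<n. (if zs!l = xs!l then 1 else 0::real)) = (if zs = xs then 1 else 0)"
proof (cases "zs = xs")
  case True then show ?thesis by simp
next
  case False
  then obtain l where "l < n" "zs!l \<noteq> xs!l" using assms nth_equalityI by metis
  then have "(\<Prod>l<n. (if zs!l = xs!l then 1 else 0::real)) = 0" by (intro prod_zero) auto
  then show ?thesis using False by simp
qed

lemma pull_inv:
  fixes \<omega> :: "'n::finite list \<Rightarrow> real"
  assumes AB: "\<forall>i j. (\<Sum>k\<in>UNIV. A i k * B k j) = (if i = j then 1 else 0)"
  shows "pull B (pull A \<omega>) = \<omega>"
proof (rule ext)
  fix xs :: "'n list"
  define n where "n = length xs"
  have "pull B (pull A \<omega>) xs = (\<Sum>ys\<in>Ls n. PA B ys xs * (\<Sum>zs\<in>Ls n. PA A zs ys * \<omega> zs))"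
    unfolding pull_def n_def by (intro sum.cong) (auto simp: Ls_def)
  also have "\<dots> = (\<Sum>ys\<in>Ls n. \<Sum>zs\<in>Ls n. \<omega> zs * (PA A zs ys * PA B ys xs))"
    by (simp add: sum_distrib_left mult_ac)
  also have "\<dots> = (\<Sum>zs\<in>Ls n. \<Sum>ys\<in>Ls n. \<omega> zs * (PA A zs ys * PA B ys xs))"
    by (rule sum.swap)
  also have "\<dots> = (\<Sum>zs\<in>Ls n. \<omega> zs * (if zs = xs then 1 else 0))"
  proof (rule sum.cong[OF refl])
    fix zs :: "'n list" assume zs: "zs \<in> Ls n"
    have "(\<Sum>ys\<in>Ls n. PA A zs ys * PA B ys xs) = (\<Sum>ys\<in>Ls n. \<Prod>l<n. A (zs!l) (ys!l) * B (ys!l) (xs!l))"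
      by (intro sum.cong refl) (auto simp: PA_def Ls_def n_def prod.distrib)
    also have "\<dots> = (\<Prod>l<n. \<Sum>y\<in>UNIV. A (zs!l) y * B y (xs!l))"
      by (rule sum_prod_Ls)
    also have "\<dots> = (\<Prod>l<n. (if zs!l = xs!l then 1 else 0))"
      using AB by simp
    also have "\<dots> = (if zs = xs then 1 else 0)"
      using zs by (intro prod_delta) (auto simp: Ls_def n_def)
    finally show "(\<Sum>ys\<in>Ls n. \<omega> zs * (PA A zs ys * PA B ys xs)) = \<omega> zs * (if zs = xs then 1 else 0)"
      by (simp add: sum_distrib_left[symmetric])
  qed
  also have "\<dots> = (\<Sum>zs\<in>Ls n. if zs = xs then \<omega> zs else 0)"
    by (intro sum.cong) auto
  also have "\<dots> = \<omega> xs"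
    by (subst sum.delta[OF finite_Ls]) (simp add: Ls_def n_def)
  finally show "pull B (pull A \<omega>) xs = \<omega> xs" .
qed

lemma pull_cochains:
  fixes \<omega> :: "'n::finite list \<Rightarrow> real"
  assumes w: "\<omega> \<in> cochains q"
  shows "pull A \<omega> \<in> cochains q"
  unfolding cochains_def
proof (intro CollectI conjI allI impI)
  fix xs :: "'n list"
  assume "length xs \<noteq> q"
  then show "pull A \<omega> xs = 0"
    using w unfolding pull_def cochains_def Ls_def by (intro sum.neutral) auto
next
  fix xs :: "'n list" and i j
  assume H: "length xs = q \<and> i < j \<and> j < q"
  define sw where "sw = (let u = [0..<q] in u[i := u!j, j := u!i])"
  have ij: "i < q" "j < q" using H by auto
  have d: "distinct sw" and s: "set sw = {..<q}" unfolding sw_def using swap_perm[OF ij] by auto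
  have xs': "xs[i := xs ! j, j := xs ! i] = map (nth xs) sw"
    unfolding sw_def using swap_as_map[of i xs j] H by simp
  have sws: "ys[i := ys ! j, j := ys ! i] = map (nth ys) sw" if "length ys = q" for ys :: "'n list"
    unfolding sw_def using swap_as_map[of i ys j] H that by simp
  have "pull A \<omega> (map (nth xs) sw) = (\<Sum>ys\<in>Ls q. PA A ys (map (nth xs) sw) * \<omega> ys)"
    unfolding pull_def using distinct_card[OF d] s H by simp
  also have "\<dots> = (\<Sum>ys\<in>Ls q. PA A (map (nth ys) sw) (map (nth xs) sw) * \<omega> (map (nth ys) sw))"
    by (rule perm_reindex[OF d s, symmetric])
  also have "\<dots> = (\<Sum>ys\<in>Ls q. - (PA A ys xs * \<omega> ys))"
  proof (rule sum.cong[OF refl])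
    fix ys :: "'n list" assume ys: "ys \<in> Ls q"
    have "\<omega> (ys[i := ys ! j, j := ys ! i]) = - \<omega> ys"
      using ys w H unfolding cochains_def Ls_def by auto
    then have "\<omega> (map (nth ys) sw) = - \<omega> ys"
      using sws[of ys] ys by (simp add: Ls_def)
    then show "PA A (map (nth ys) sw) (map (nth xs) sw) * \<omega> (map (nth ys) sw) = - (PA A ys xs * \<omega> ys)"
      using perm_PA[OF d s, of ys xs A] ys H by (simp add: Ls_def)
  qed
  also have "\<dots> = - pull A \<omega> xs" unfolding pull_def using H by (simp add: sum_negf)
  finally show "pull A \<omega> (xs[i := xs ! j, j := xs ! i]) = - pull A \<omega> xs" using xs' by simp
qed



lemma pull_inter:
  fixes c c' :: "'n::finite lie_str" and A :: "'n \<Rightarrow> 'n \<Rightarrow> real" and \<omega> :: "'n list \<Rightarrow> real"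
  assumes iso: "\<forall>i j m. (\<Sum>k\<in>UNIV. c i j k * A m k) = (\<Sum>k\<in>UNIV. \<Sum>l\<in>UNIV. A k i * A l j * c' k l m)"
  shows "ce_diff c (pull A \<omega>) xs = pull A (ce_diff c' \<omega>) xs"
proof -
  define n where "n = length xs"
  define G where "G a b zs = (\<Sum>k\<in>UNIV. c' a b k * \<omega> (k # zs))" for a b zs
  have per: "(\<Sum>k\<in>UNIV. c (xs!i) (xs!j) k * pull A \<omega> (k # drop_two xs i j)) =
      (\<Sum>ys\<in>Ls n. PA A ys xs * G (ys!i) (ys!j) (drop_two ys i j))" if ij: "i < j" "j < n" for i j
  proof -
    define m where "m = n - 2"
    define dx where "dx = drop_two xs i j"
    have ldx: "length dx = m" using length_drop_two[of i j xs] ij by (simp add: dx_def m_def n_def)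
    have nm: "n = Suc (Suc m)" using ij m_def by auto
    define fr where "fr = i # j # filter (\<lambda>l. l \<noteq> i \<and> l \<noteq> j) [0..<n]"
    have d: "distinct fr" and s: "set fr = {..<n}" using front_perm[OF ij] fr_def by auto
    have L1: "pull A \<omega> (k # dx) = (\<Sum>mm\<in>UNIV. \<Sum>zs\<in>Ls m. A mm k * (PA A zs dx * \<omega> (mm # zs)))" for k
      unfolding pull_def using ldx by (simp add: sum_Ls_Suc PA_Cons mult.assoc)
    have "(\<Sum>k\<in>UNIV. c (xs!i) (xs!j) k * pull A \<omega> (k # dx)) =
        (\<Sum>k\<in>UNIV. c (xs!i) (xs!j) k * (\<Sum>mm\<in>UNIV. \<Sum>zs\<in>Ls m. A mm k * (PA A zs dx * \<omega> (mm # zs))))"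
      by (simp add: L1)
    also have "\<dots> = (\<Sum>mm\<in>UNIV. \<Sum>zs\<in>Ls m. (\<Sum>k\<in>UNIV. c (xs!i) (xs!j) k * A mm k) * (PA A zs dx * \<omega> (mm # zs)))"
      by (rule A1[where c = "\<lambda>k. c (xs!i) (xs!j) k" and a = "\<lambda>mm k. A mm k" and p = "\<lambda>zs mm. PA A zs dx * \<omega> (mm # zs)"])
    also have "\<dots> = (\<Sum>mm\<in>UNIV. \<Sum>zs\<in>Ls m. (\<Sum>a\<in>UNIV. \<Sum>b\<in>UNIV. A a (xs!i) * A b (xs!j) * c' a b mm) * PA A zs dx * \<omega> (mm # zs))"
      using iso by (simp add: mult.assoc)
    finally have LHS: "(\<Sum>k\<in>UNIV. c (xs!i) (xs!j) k * pull A \<omega> (k # dx)) =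
        (\<Sum>mm\<in>UNIV. \<Sum>zs\<in>Ls m. (\<Sum>a\<in>UNIV. \<Sum>b\<in>UNIV. A a (xs!i) * A b (xs!j) * c' a b mm) * PA A zs dx * \<omega> (mm # zs))" .
    define H where "H zs = PA A zs (map (nth xs) fr) * G (zs!0) (zs!1) (drop 2 zs)" for zs
    have mx: "map (nth xs) fr = xs!i # xs!j # dx" unfolding fr_def dx_def n_def by (simp only: front_as_map)
    have "(\<Sum>ys\<in>Ls n. PA A ys xs * G (ys!i) (ys!j) (drop_two ys i j)) = (\<Sum>ys\<in>Ls n. H (map (nth ys) fr))"
    proof (rule sum.cong[OF refl])
      fix ys :: "'n list" assume ys: "ys \<in> Ls n"
      have lys: "length ys = n" using ys by (simp add: Ls_def)
      have my: "map (nth ys) fr = ys!i # ys!j # drop_two ys i j"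
        unfolding fr_def by (simp only: front_as_map lys)
      have "PA A ys xs = PA A (map (nth ys) fr) (map (nth xs) fr)"
        using perm_PA[OF d s lys, of xs A] n_def by simp
      then show "PA A ys xs * G (ys!i) (ys!j) (drop_two ys i j) = H (map (nth ys) fr)"
        unfolding H_def by (simp add: my)
    qed
    also have "\<dots> = (\<Sum>ys\<in>Ls n. H ys)" by (rule perm_reindex[OF d s])
    also have "\<dots> = (\<Sum>a\<in>UNIV. \<Sum>b\<in>UNIV. \<Sum>zs\<in>Ls m. H (a # b # zs))"
      unfolding nm by (simp add: sum_Ls_Suc)
    also have "\<dots> = (\<Sum>a\<in>UNIV. \<Sum>b\<in>UNIV. \<Sum>zs\<in>Ls m. A a (xs!i) * A b (xs!j) * PA A zs dx * (\<Sum>k\<in>UNIV. c' a b k * \<omega> (k # zs)))"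
      by (simp add: H_def mx PA_Cons G_def mult.assoc)
    also have "\<dots> = (\<Sum>k\<in>UNIV. \<Sum>zs\<in>Ls m. (\<Sum>a\<in>UNIV. \<Sum>b\<in>UNIV. A a (xs!i) * A b (xs!j) * c' a b k) * PA A zs dx * \<omega> (k # zs))"
      by (rule A2[where X = "\<lambda>a. A a (xs!i)" and Y = "\<lambda>b. A b (xs!j)" and P = "\<lambda>zs. PA A zs dx" and C = c' and W = "\<lambda>k zs. \<omega> (k # zs)"])
    finally show ?thesis using LHS by (simp add: dx_def)
  qed
  have "pull A (ce_diff c' \<omega>) xs = (\<Sum>ys\<in>Ls n. PA A ys xs * (\<Sum>j<n. \<Sum>i<j. (-1) ^ (i + j) * G (ys!i) (ys!j) (drop_two ys i j)))"
    unfolding pull_def ce_diff_def G_def n_def by (intro sum.cong refl) (simp add: Ls_def)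
  also have "\<dots> = (\<Sum>ys\<in>Ls n. \<Sum>j<n. \<Sum>i<j. (-1) ^ (i + j) * (PA A ys xs * G (ys!i) (ys!j) (drop_two ys i j)))"
    by (simp add: sum_distrib_left mult.left_commute)
  also have "\<dots> = (\<Sum>j<n. \<Sum>ys\<in>Ls n. \<Sum>i<j. (-1) ^ (i + j) * (PA A ys xs * G (ys!i) (ys!j) (drop_two ys i j)))"
    by (rule sum.swap)
  also have "\<dots> = (\<Sum>j<n. \<Sum>i<j. \<Sum>ys\<in>Ls n. (-1) ^ (i + j) * (PA A ys xs * G (ys!i) (ys!j) (drop_two ys i j)))"
    by (rule sum.cong[OF refl], rule sum.swap)
  also have "\<dots> = (\<Sum>j<n. \<Sum>i<j. (-1) ^ (i + j) * (\<Sum>ys\<in>Ls n. PA A ys xs * G (ys!i) (ys!j) (drop_two ys i j)))"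
    by (simp add: sum_distrib_left)
  also have "\<dots> = (\<Sum>j<n. \<Sum>i<j. (-1) ^ (i + j) * (\<Sum>k\<in>UNIV. c (xs!i) (xs!j) k * pull A \<omega> (k # drop_two xs i j)))"
    by (intro sum.cong refl) (simp add: per)
  also have "\<dots> = ce_diff c (pull A \<omega>) xs"
    unfolding ce_diff_def n_def ..
  finally show ?thesis by simp
qed



definition dl :: "'n list \<Rightarrow> 'n list \<Rightarrow> real" where
  "dl ys = (\<lambda>x. if x = ys then 1 else 0)"

lemma cochains_span:
  "cochains q \<subseteq> module.span (\<lambda>(r::real) (f::'n::finite list \<Rightarrow> real) x. r * f x) (dl ` Ls q)"
proof
  interpret V: vector_space "\<lambda>(r::real) (f::'n list \<Rightarrow> real) x. r * f x" by (rule vs)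
  fix \<omega> :: "'n list \<Rightarrow> real" assume w: "\<omega> \<in> cochains q"
  have e: "\<omega> = (\<Sum>ys\<in>Ls q. (\<lambda>x. \<omega> ys * dl ys x))"
  proof (rule ext)
    fix x :: "'n list"
    have "(\<Sum>ys\<in>Ls q. (\<lambda>x. \<omega> ys * dl ys x)) x = (\<Sum>ys\<in>Ls q. if x = ys then \<omega> x else 0)"
      unfolding sum_fun_apply dl_def by (intro sum.cong) auto
    also have "\<dots> = \<omega> x"
      by (subst sum.delta'[OF finite_Ls]) (use w in \<open>auto simp: Ls_def cochains_def\<close>)
    finally show "\<omega> x = (\<Sum>ys\<in>Ls q. (\<lambda>x. \<omega> ys * dl ys x)) x" by simp
  qed
  show "\<omega> \<in> V.span (dl ` Ls q)"
    by (subst e, rule V.span_sum, rule V.span_scale, rule V.span_base) auto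
qed

lemma cochains_subspace:
  "module.subspace (\<lambda>(r::real) (f::'n::finite list \<Rightarrow> real) x. r * f x) (cochains q)"
proof -
  interpret V: vector_space "\<lambda>(r::real) (f::'n list \<Rightarrow> real) x. r * f x" by (rule vs)
  show ?thesis unfolding V.subspace_def cochains_def by (auto simp: zero_fun_def)
qed

lemma mh_ce_diff:
  "module_hom (\<lambda>(r::real) (f::'n::finite list \<Rightarrow> real) x. r * f x) (\<lambda>(r::real) (f::'n list \<Rightarrow> real) x. r * f x) (ce_diff c)"
  unfolding module_hom_iff module_iff_vector_space
  by (auto simp: vs fun_eq_iff ce_diff_def sum.distrib distrib_left sum_distrib_left mult_ac)

lemma mh_pull:
  "module_hom (\<lambda>(r::real) (f::'n::finite list \<Rightarrow> real) x. r * f x) (\<lambda>(r::real) (f::'n list \<Rightarrow> real) x. r * f x) (pull A)"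
  unfolding module_hom_iff module_iff_vector_space
  by (auto simp: vs pull_add pull_scale)

lemma betti_formula:
  fixes c :: "'n::finite lie_str"
  assumes "1 \<le> p"
  shows "betti c p = (fdim (cochains p :: ('n list \<Rightarrow> real) set) - fdim (ce_diff c ` cochains p)) - fdim (ce_diff c ` cochains (p - 1))"
proof -
  interpret V: vector_space "\<lambda>(r::real) (f::'n list \<Rightarrow> real) x. r * f x" by (rule vs)
  have z: "cocycles c p = {x \<in> cochains p. ce_diff c x = 0}"
    unfolding cocycles_def by (simp add: zero_fun_def)
  have "fdim (cocycles c p) + fdim (ce_diff c ` cochains p) = fdim (cochains p :: ('n list \<Rightarrow> real) set)"
    unfolding z using V.my_rank_nullity[OF cochains_subspace cochains_span finite_imageI[OF finite_Ls] mh_ce_diff]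
    by simp
  moreover have "coboundaries c p = ce_diff c ` cochains (p - 1)"
    using assms by (simp add: coboundaries_def)
  ultimately show ?thesis unfolding betti_def by (simp add: diff_diff_left)
qed

lemma rank_inv:
  fixes c c' :: "'n::finite lie_str"
  assumes "lie_iso c c'"
  shows "fdim (ce_diff c ` cochains q) = fdim (ce_diff c' ` cochains q)"
proof -
  interpret V: vector_space "\<lambda>(r::real) (f::'n list \<Rightarrow> real) x. r * f x" by (rule vs)
  obtain A B :: "'n \<Rightarrow> 'n \<Rightarrow> real" where
    AB: "\<forall>i j. (\<Sum>k\<in>UNIV. A i k * B k j) = (if i = j then 1 else 0)" and
    BA: "\<forall>i j. (\<Sum>k\<in>UNIV. B i k * A k j) = (if i = j then 1 else 0)" and
    iso: "\<forall>i j m. (\<Sum>k\<in>UNIV. c i j k * A m k) = (\<Sum>k\<in>UNIV. \<Sum>l\<in>UNIV. A k i * A l j * c' k l m)"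
    using assms unfolding lie_iso_def by blast
  show ?thesis
  proof (rule V.dim_conj_eq[OF cochains_span finite_imageI[OF finite_Ls] mh_pull mh_pull mh_ce_diff])
    show "\<And>x. pull A (pull B x) = x" using pull_inv[OF BA] by blast
    show "\<And>x. pull B (pull A x) = x" using pull_inv[OF AB] by blast
    show "pull A ` cochains q \<subseteq> cochains q" using pull_cochains by blast
    show "pull B ` cochains q \<subseteq> cochains q" using pull_cochains by blast
    show "\<And>x. ce_diff c (pull A x) = pull A (ce_diff c' x)" using pull_inter[OF iso] by blast
  qed
qed

lemma betti_inv:
  fixes c c' :: "'n::finite lie_str"
  assumes "lie_iso c c'" "1 \<le> p"
  shows "betti c p = betti c' p"
  using betti_formula[OF assms(2)] rank_inv[OF assms(1)] by metis



lemma semicont: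
  fixes c :: "real \<Rightarrow> 'n::finite lie_str"
  assumes cont: "\<And>i j k. ((\<lambda>t. c t i j k) \<longlongrightarrow> c 0 i j k) F"
  shows "eventually (\<lambda>t. fdim (ce_diff (c 0) ` cochains q) \<le> fdim (ce_diff (c t) ` cochains q)) F"
proof -
  interpret V: vector_space "\<lambda>(r::real) (f::'n list \<Rightarrow> real) x. r * f x" by (rule vs)
  let ?C = "cochains q :: ('n list \<Rightarrow> real) set"
  let ?F = "dl ` Ls q :: ('n list \<Rightarrow> real) set"
  have fF: "finite ?F" using finite_Ls by blast
  have Ysp: "ce_diff d ` ?C \<subseteq> V.span (ce_diff d ` ?F)" for d :: "'n lie_str"
    using module_hom.spans_image[OF mh_ce_diff cochains_span] .
  obtain K where K: "K \<subseteq> ce_diff (c 0) ` ?C" "V.independent K" "ce_diff (c 0) ` ?C \<subseteq> V.span K"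
      "card K = V.dim (ce_diff (c 0) ` ?C)" by (rule V.basis_exists)
  have fK: "finite K"
    using V.independent_span_bound[OF finite_imageI[OF fF] K(2)] K(1) Ysp by blast
  define r where "r = card K"
  obtain h where h: "bij_betw h {0..<r} K" using ex_bij_betw_nat_finite[OF fK] r_def by blast
  have "\<forall>i. \<exists>x. i < r \<longrightarrow> x \<in> ?C \<and> h i = ce_diff (c 0) x"
  proof (rule allI)
    fix i show "\<exists>x. i < r \<longrightarrow> x \<in> ?C \<and> h i = ce_diff (c 0) x"
    proof (cases "i < r")
      case True
      then have "h i \<in> K" using h unfolding bij_betw_def by auto
      then show ?thesis using K(1) by auto
    qed auto
  qed
  from choice[OF this] obtain w where w: "\<And>i. i < r \<Longrightarrow> w i \<in> ?C \<and> h i = ce_diff (c 0) (w i)"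
    by blast
  define g where "g t i = ce_diff (c t) (w i)" for t i
  have ind0: "indepF r (g 0)"
    unfolding indepF_def
  proof (rule allI, rule impI)
    fix a assume H: "\<forall>x. (\<Sum>i<r. a i * g 0 i x) = 0"
    define b where "b v = a (inv_into {0..<r} h v)" for v
    have "(\<Sum>v\<in>K. (\<lambda>x. b v * v x)) = (\<Sum>i\<in>{0..<r}. (\<lambda>x. b (h i) * h i x))"
      using sum.reindex_bij_betw[OF h, of "\<lambda>v. (\<lambda>x. b v * v x)"] by simp
    also have "\<dots> = (\<Sum>i\<in>{0..<r}. (\<lambda>x. a i * g 0 i x))"
    proof (rule sum.cong[OF refl])
      fix i assume i: "i \<in> {0..<r}"
      have "b (h i) = a i" using h i unfolding b_def bij_betw_def by (simp add: inv_into_f_f)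
      moreover have "h i = g 0 i" using w i by (simp add: g_def)
      ultimately show "(\<lambda>x. b (h i) * h i x) = (\<lambda>x. a i * g 0 i x)" by simp
    qed
    also have "\<dots> = 0"
      using H by (simp add: fun_eq_iff sum_fun_apply atLeast0LessThan)
    finally have "(\<Sum>v\<in>K. (\<lambda>x. b v * v x)) = 0" .
    then have "\<forall>v\<in>K. b v = 0" using K(2) V.dependent_finite[OF fK] by blast
    then show "\<forall>i<r. a i = 0"
    proof (intro allI impI)
      fix i assume i: "i < r"
      have "b (h i) = a i" using h i unfolding b_def bij_betw_def by (simp add: inv_into_f_f)
      moreover have "h i \<in> K" using h i unfolding bij_betw_def by auto
      ultimately show "a i = 0" using \<open>\<forall>v\<in>K. b v = 0\<close> by metis
    qed
  qed
  have tends: "((\<lambda>t. g t i x) \<longlongrightarrow> g 0 i x) F" for i x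
    unfolding g_def ce_diff_def by (intro tendsto_intros cont)
  have ev: "eventually (\<lambda>t. indepF r (g t)) F" by (rule persist[OF ind0 tends])
  show ?thesis
  proof (rule eventually_mono[OF ev])
    fix t assume I: "indepF r (g t)"
    have inj: "inj_on (g t) {..<r}"
    proof (rule inj_onI, rule ccontr)
      fix i j assume i: "i \<in> {..<r}" and j: "j \<in> {..<r}" and e: "g t i = g t j" and ne: "i \<noteq> j"
      define a where "a l = (if l = i then 1 else if l = j then -1 else (0::real))" for l
      have "\<forall>x. (\<Sum>l<r. a l * g t l x) = 0"
      proof
        fix x
        have "(\<Sum>l<r. a l * g t l x) = (\<Sum>l<r. (if l = i then g t i x else 0) - (if l = j then g t j x else 0))"
          using ne by (intro sum.cong refl) (auto simp: a_def)
        also have "\<dots> = g t i x - g t j x"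
          using i j by (simp add: sum_subtractf)
        finally show "(\<Sum>l<r. a l * g t l x) = 0" using e by simp
      qed
      then have "a i = 0" using I i unfolding indepF_def by blast
      then show False by (simp add: a_def)
    qed
    let ?G = "g t ` {..<r}"
    have indG: "V.independent ?G"
    proof (rule V.independent_if_scalars_zero)
      show "finite ?G" by simp
      fix f v assume S: "(\<Sum>x\<in>?G. (\<lambda>y. f x * x y)) = 0" and v: "v \<in> ?G"
      have "(\<Sum>i<r. (\<lambda>y. f (g t i) * g t i y)) = 0"
        using S sum.reindex[OF inj, of "\<lambda>x. (\<lambda>y. f x * x y)"] by simp
      then have "\<forall>x. (\<Sum>i<r. f (g t i) * g t i x) = 0"
        by (simp add: fun_eq_iff sum_fun_apply)
      then have "\<forall>i<r. f (g t i) = 0"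
        using I[unfolded indepF_def, THEN spec[of _ "\<lambda>i. f (g t i)"]] by blast
      then show "f v = 0" using v by auto
    qed
    have Gsub: "?G \<subseteq> ce_diff (c t) ` ?C" using w unfolding g_def by auto
    have "card ?G \<le> V.dim (ce_diff (c t) ` ?C)"
      using V.my_card_le_dim[OF indG Gsub Ysp finite_imageI[OF fF]] by blast
    moreover have "card ?G = r" using card_image[OF inj] by simp
    ultimately show "fdim (ce_diff (c 0) ` cochains q) \<le> fdim (ce_diff (c t) ` cochains q)"
      using K(4) r_def by simp
  qed
qed



theorem proposition4:
  fixes c :: "real \<Rightarrow> 'n::finite lie_str" and g :: "'n lie_str"
  assumes "is_deformation c"
    and "is_lie g"
    and "lie_iso (c 1) g"
    and "\<not> lie_iso (c 0) g"
    and "\<exists>i. coeff (poincare_poly (c 0) - poincare_poly g) i < 0"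
  shows "\<not> plateau_type c"
proof
  assume pl: "plateau_type c"
  then have isot: "\<And>t. t \<in> {0<..1} \<Longrightarrow> lie_iso (c t) (c 1)" unfolding plateau_type_def by blast
  obtain k where k: "coeff (poincare_poly (c 0) - poincare_poly g) k < 0" using assms(5) by blast
  have coeffP: "coeff (poincare_poly d) k = (if k = 0 then 1 else 0) +
      (if k \<in> {1..CARD('n)} then real (betti d k) else 0)" for d :: "'n lie_str"
    unfolding poincare_poly_def by (simp add: coeff_sum coeff_monom coeff_1)
  have k1: "k \<in> {1..CARD('n)}" and blt: "betti (c 0) k < betti g k"
    using k by (auto simp: coeffP split: if_splits)
  have kp: "1 \<le> k" using k1 by simp
  have cont: "((\<lambda>t. c t i j l) \<longlongrightarrow> c 0 i j l) (at 0 within {0..1})" for i j l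
    using assms(1) unfolding is_deformation_def continuous_on_def by auto
  have ev: "eventually (\<lambda>t. fdim (ce_diff (c 0) ` cochains k) \<le> fdim (ce_diff (c t) ` cochains k) \<and>
      fdim (ce_diff (c 0) ` cochains (k - 1)) \<le> fdim (ce_diff (c t) ` cochains (k - 1))) (at 0 within {0..1})"
    using semicont[OF cont] by (rule eventually_conj) (rule semicont[OF cont])
  then obtain d :: real where d: "d > 0" and dP: "\<And>t. t \<in> {0..1} \<Longrightarrow> t \<noteq> 0 \<Longrightarrow> dist t 0 < d \<Longrightarrow>
      fdim (ce_diff (c 0) ` cochains k) \<le> fdim (ce_diff (c t) ` cochains k) \<and>
      fdim (ce_diff (c 0) ` cochains (k - 1)) \<le> fdim (ce_diff (c t) ` cochains (k - 1))"
    unfolding eventually_at by blast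
  define t where "t = min (d / 2) 1"
  have t: "t \<in> {0<..1}" "t \<in> {0..1}" "t \<noteq> 0" "dist t 0 < d"
    using d by (auto simp: t_def dist_real_def)
  have r: "fdim (ce_diff (c 0) ` cochains k) \<le> fdim (ce_diff (c t) ` cochains k)"
     "fdim (ce_diff (c 0) ` cochains (k - 1)) \<le> fdim (ce_diff (c t) ` cochains (k - 1))"
    using dP[OF t(2) t(3) t(4)] by auto
  have bt: "betti (c t) k = betti g k"
    using betti_inv[OF isot[OF t(1)] kp] betti_inv[OF assms(3) kp] by simp
  have "betti (c t) k \<le> betti (c 0) k"
    unfolding betti_formula[OF kp] using r by arith
  then show False using bt blt by simp
qed


end
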